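(* Let $W$ be a right-angled Coxeter group with simple generators $S$, and let $x_1,x_2,y_1,y_2\in W$ form a butterfly. If $q\in D_L(y_1)\cap D_L(y_2)$, then $q\in D_L(x_1)\cap D_L(x_2)$.
   Context: $W$ is right-angled: every two distinct simple generators either commute or generate an infinite dihedral group. $\ell$ is length, $D_L(x)=\{q\in S:\ell(qx)<\ell(x)\}$, $\le$ Bruhat order and $\lessdot$ its covers. Elements $x_1,x_2,y_1,y_2$ with $x_1\ne x_2$, $y_1\ne y_2$ form a butterfly if $x_a\lessdot y_b$ for all $a,b\in\{1,2\}$. *)

theory Defs
  imports Main
begin

text \<open>Right-angled Coxeter system given by generator set S and a symmetric,
irreflexive commutation relation E on S: for distinct s,t in S, m(s,t)=2 if E s t,
otherwise m(s,t)=infinity.  Elements of W are represented by words over S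
(lists S); two words represent the same element iff they are related by the
congruence generated by the defining relations ss = 1 and st = ts (E s t).\<close>

definition right_angled :: "'a set \<Rightarrow> ('a \<Rightarrow> 'a \<Rightarrow> bool) \<Rightarrow> bool" where
  "right_angled S E \<longleftrightarrow> (\<forall>s t. E s t \<longrightarrow> s \<in> S \<and> t \<in> S \<and> s \<noteq> t \<and> E t s)"

definition rel_step :: "'a set \<Rightarrow> ('a \<Rightarrow> 'a \<Rightarrow> bool) \<Rightarrow> 'a list \<Rightarrow> 'a list \<Rightarrow> bool" where
  "rel_step S E u v \<longleftrightarrow>
     (\<exists>a b s. s \<in> S \<and> u = a @ [s, s] @ b \<and> v = a @ b) \<or>
     (\<exists>a b s t. s \<in> S \<and> t \<in> S \<and> E s t \<and> u = a @ [s, t] @ b \<and> v = a @ [t, s] @ b)"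

definition weq :: "'a set \<Rightarrow> ('a \<Rightarrow> 'a \<Rightarrow> bool) \<Rightarrow> 'a list \<Rightarrow> 'a list \<Rightarrow> bool" where
  "weq S E = equivclp (rel_step S E)"

definition len :: "'a set \<Rightarrow> ('a \<Rightarrow> 'a \<Rightarrow> bool) \<Rightarrow> 'a list \<Rightarrow> nat" where
  "len S E w = (LEAST n. \<exists>u \<in> lists S. weq S E u w \<and> length u = n)"

definition reflection :: "'a set \<Rightarrow> 'a list \<Rightarrow> bool" where
  "reflection S t \<longleftrightarrow> (\<exists>u \<in> lists S. \<exists>s \<in> S. t = u @ [s] @ rev u)"

definition bruhat_step :: "'a set \<Rightarrow> ('a \<Rightarrow> 'a \<Rightarrow> bool) \<Rightarrow> 'a list \<Rightarrow> 'a list \<Rightarrow> bool" where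
  "bruhat_step S E x y \<longleftrightarrow> x \<in> lists S \<and> y \<in> lists S \<and>
     (\<exists>t. reflection S t \<and> weq S E (x @ t) y) \<and> len S E x < len S E y"

definition bruhat_le :: "'a set \<Rightarrow> ('a \<Rightarrow> 'a \<Rightarrow> bool) \<Rightarrow> 'a list \<Rightarrow> 'a list \<Rightarrow> bool" where
  "bruhat_le S E x y \<longleftrightarrow> weq S E x y \<or> (bruhat_step S E)\<^sup>+\<^sup>+ x y"

definition bruhat_less :: "'a set \<Rightarrow> ('a \<Rightarrow> 'a \<Rightarrow> bool) \<Rightarrow> 'a list \<Rightarrow> 'a list \<Rightarrow> bool" where
  "bruhat_less S E x y \<longleftrightarrow> bruhat_le S E x y \<and> \<not> weq S E x y"

definition bruhat_cover :: "'a set \<Rightarrow> ('a \<Rightarrow> 'a \<Rightarrow> bool) \<Rightarrow> 'a list \<Rightarrow> 'a list \<Rightarrow> bool" where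
  "bruhat_cover S E x y \<longleftrightarrow> bruhat_less S E x y \<and>
     \<not> (\<exists>z \<in> lists S. bruhat_less S E x z \<and> bruhat_less S E z y)"

definition left_descents :: "'a set \<Rightarrow> ('a \<Rightarrow> 'a \<Rightarrow> bool) \<Rightarrow> 'a list \<Rightarrow> 'a set" where
  "left_descents S E x = {q \<in> S. len S E (q # x) < len S E x}"

definition butterfly :: "'a set \<Rightarrow> ('a \<Rightarrow> 'a \<Rightarrow> bool) \<Rightarrow> 'a list \<Rightarrow> 'a list \<Rightarrow> 'a list \<Rightarrow> 'a list \<Rightarrow> bool" where
  "butterfly S E x1 x2 y1 y2 \<longleftrightarrow>
     x1 \<in> lists S \<and> x2 \<in> lists S \<and> y1 \<in> lists S \<and> y2 \<in> lists S \<and>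
     \<not> weq S E x1 x2 \<and> \<not> weq S E y1 y2 \<and>
     bruhat_cover S E x1 y1 \<and> bruhat_cover S E x1 y2 \<and>
     bruhat_cover S E x2 y1 \<and> bruhat_cover S E x2 y2"

end

theory Submission
  imports Defs
begin


lemma weq_refl[simp]: "weq S E x x" by (simp add: weq_def)
lemma weq_sym: "weq S E x y \<Longrightarrow> weq S E y x" unfolding weq_def by (rule equivclp_sym)
lemma weq_trans: "weq S E x y \<Longrightarrow> weq S E y z \<Longrightarrow> weq S E x z"
  unfolding weq_def by (rule equivclp_trans)

lemma rel_step_ctx: "rel_step S E u v \<Longrightarrow> rel_step S E (c@u@d) (c@v@d)"
  unfolding rel_step_def
  apply (elim disjE exE conjE)
   apply (rule disjI1) apply (rule_tac x="c@a" in exI, rule_tac x="b@d" in exI) apply force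
  apply (rule disjI2) apply (rule_tac x="c@a" in exI, rule_tac x="b@d" in exI) apply force
  done

lemma weq_ctx: "weq S E u v \<Longrightarrow> weq S E (c@u@d) (c@v@d)"
  unfolding weq_def
proof (induction rule: equivclp_induct)
  case base then show ?case by simp
next
  case (step y z)
  then show ?case using rel_step_ctx[of S E y z c d] rel_step_ctx[of S E z y c d]
    by (meson equivclp_into_equivclp)
qed

lemma weq_app: "weq S E u v \<Longrightarrow> weq S E u' v' \<Longrightarrow> weq S E (u@u') (v@v')"
  using weq_ctx[of S E u v "[]" u'] weq_ctx[of S E u' v' v "[]"] weq_trans by fastforce

lemma weq_cons: "weq S E u v \<Longrightarrow> weq S E (s#u) (s#v)"
  using weq_ctx[of S E u v "[s]" "[]"] by simp

lemma weq_cancel: "s \<in> S \<Longrightarrow> weq S E (c@[s,s]@d) (c@d)"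
  unfolding weq_def by (rule r_into_equivclp) (auto simp: rel_step_def)

lemma weq_cancel0: "s \<in> S \<Longrightarrow> weq S E (s#s#d) d"
  using weq_cancel[of s S E "[]" d] by simp

lemma weq_comm: "s \<in> S \<Longrightarrow> t \<in> S \<Longrightarrow> E s t \<Longrightarrow> weq S E (c@[s,t]@d) (c@[t,s]@d)"
  unfolding weq_def by (rule r_into_equivclp) (unfold rel_step_def, rule disjI2, blast)

lemma weq_rev_cancel: "u \<in> lists S \<Longrightarrow> weq S E (u @ rev u @ d) d"
proof (induction u arbitrary: d rule: rev_induct)
  case Nil then show ?case by simp
next
  case (snoc x xs)
  have "weq S E (xs @ [x] @ [x] @ rev xs @ d) (xs @ rev xs @ d)"
    using weq_cancel[of x S E xs "rev xs @ d"] snoc by simp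
  then show ?case using snoc weq_trans by fastforce
qed

lemma weq_rev_cancel2: "u \<in> lists S \<Longrightarrow> weq S E (rev u @ u @ d) d"
proof -
  assume "u \<in> lists S"
  then have "rev u \<in> lists S" by auto
  then show ?thesis using weq_rev_cancel[of "rev u" S E d] by simp
qed

lemma rel_step_lists: "rel_step S E u v \<Longrightarrow> (u \<in> lists S) = (v \<in> lists S)"
  unfolding rel_step_def by auto

lemma weq_lists: "weq S E u v \<Longrightarrow> u \<in> lists S \<Longrightarrow> v \<in> lists S"
  unfolding weq_def
  by (induction rule: equivclp_induct) (use rel_step_lists in blast)+

lemma weq_conj: assumes sS: "s \<in> S" shows "weq S E (s#r@[s]) t = weq S E r (s#t@[s])"
proof
  assume "weq S E (s#r@[s]) t"
  then have "weq S E ([s]@(s#r@[s])@[s]) (s#t@[s])" using weq_ctx[of S E "s#r@[s]" t "[s]" "[s]"] by simp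
  moreover have "weq S E ([s]@(s#r@[s])@[s]) r"
    using weq_cancel[of s S E "[]" "r@[s,s]"] weq_cancel[of s S E r "[]"] weq_trans sS by fastforce
  ultimately show "weq S E r (s#t@[s])" using weq_sym weq_trans by blast
next
  assume "weq S E r (s#t@[s])"
  then have "weq S E ([s]@r@[s]) ([s]@(s#t@[s])@[s])" using weq_ctx[of S E r "s#t@[s]" "[s]" "[s]"] by simp
  moreover have "weq S E ([s]@(s#t@[s])@[s]) t"
    using weq_cancel[of s S E "[]" "t@[s,s]"] weq_cancel[of s S E t "[]"] weq_trans sS by fastforce
  ultimately show "weq S E (s#r@[s]) t" using weq_trans by fastforce
qed



fun par :: "'a set \<Rightarrow> ('a \<Rightarrow> 'a \<Rightarrow> bool) \<Rightarrow> 'a list \<Rightarrow> 'a list \<Rightarrow> bool" where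
  "par S E [] t = False"
| "par S E (s#w) t = (weq S E [s] t \<noteq> par S E w (s#t@[s]))"

lemma par_weq_t: "weq S E t t' \<Longrightarrow> par S E w t = par S E w t'"
proof (induction w arbitrary: t t')
  case Nil then show ?case by simp
next
  case (Cons s w)
  have "weq S E (s#t@[s]) (s#t'@[s])" using weq_ctx[OF Cons.prems, of "[s]" "[s]"] by simp
  then have "par S E w (s#t@[s]) = par S E w (s#t'@[s])" using Cons.IH by blast
  moreover have "weq S E [s] t = weq S E [s] t'" using Cons.prems weq_trans weq_sym by blast
  ultimately show ?case by simp
qed

lemma par_append: "par S E (u@v) t = (par S E u t \<noteq> par S E v (rev u @ t @ u))"
  by (induction u arbitrary: t) auto

lemma par_step: "rel_step S E u v \<Longrightarrow> par S E u t = par S E v t"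
proof -
  assume "rel_step S E u v"
  then consider (c) a b s where "s \<in> S" "u = a @ [s, s] @ b" "v = a @ b"
    | (m) a b s r where "s \<in> S" "r \<in> S" "E s r" "u = a @ [s, r] @ b" "v = a @ [r, s] @ b"
    unfolding rel_step_def by blast
  then show ?thesis
  proof cases
    case c
    define x where "x = rev a @ t @ a"
    have 1: "weq S E [s] (s#x@[s]) = weq S E [s] x"
      using weq_conj[of s S E "[s]" x, symmetric] c(1) weq_cancel[of s S E "[]" "[s]"] c(1)
        weq_trans weq_sym by (metis append_Cons append_Nil)
    have "weq S E (s#s#x@[s,s]) x"
      using weq_cancel[of s S E "[]" "x@[s,s]"] c(1) weq_cancel[of s S E x "[]"] c(1) weq_trans
      by fastforce
    then have 2: "par S E b (s#s#x@[s,s]) = par S E b x" using par_weq_t by blast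
    show ?thesis using 1 2 by (simp add: c par_append x_def[symmetric]) blast
  next
    case m
    define x where "x = rev a @ t @ a"
    have sr: "weq S E (s#[r]@[s]) [r]"
      using weq_comm[of s S r E "[]" "[s]"] weq_cancel[of s S E "[r]" "[]"] m weq_trans
      by fastforce
    have rs: "weq S E (r#[s]@[r]) [s]"
    proof -
      have "weq S E ([]@[r,s]@[r]) ([]@[s,r]@[r])"
        using weq_comm[of s S r E "[]" "[r]"] m weq_sym by fastforce
      moreover have "weq S E ([s]@[r,r]@[]) ([s]@[])" using weq_cancel[of r S E "[s]" "[]"] m by blast
      ultimately show ?thesis using weq_trans by fastforce
    qed
    have 1: "weq S E [r] (s#x@[s]) = weq S E [r] x"
      using weq_conj[of s S E "[r]" x, symmetric] m sr weq_trans weq_sym by blast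
    have 2: "weq S E [s] (r#x@[r]) = weq S E [s] x"
      using weq_conj[of r S E "[s]" x, symmetric] m rs weq_trans weq_sym by blast
    have "weq S E (r#s#x@[s,r]) (s#r#x@[r,s])"
    proof -
      have "weq S E ([r,s]@x@[s,r]) ([s,r]@x@[s,r])"
        using weq_comm[of s S r E "[]" "[]"] m weq_sym weq_app[of S E "[r,s]" "[s,r]" "x@[s,r]" "x@[s,r]"]
        by fastforce
      moreover have "weq S E ([s,r]@x@[s,r]) ([s,r]@x@[r,s])"
        using weq_comm[of s S r E "[s,r]@x" "[]"] m by fastforce
      ultimately show ?thesis using weq_trans by fastforce
    qed
    then have 3: "par S E b (r#s#x@[s,r]) = par S E b (s#r#x@[r,s])" using par_weq_t by blast
    show ?thesis using 1 2 3 by (simp add: m par_append x_def[symmetric]) blast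
  qed
qed



lemma par_weq: "weq S E u v \<Longrightarrow> par S E u t = par S E v t"
  unfolding weq_def
  by (induction rule: equivclp_induct) (use par_step in metis)+

lemma refl_rev: "reflection S t \<Longrightarrow> rev t = t"
  unfolding reflection_def by auto

lemma refl_lists: "reflection S t \<Longrightarrow> t \<in> lists S"
  unfolding reflection_def by auto

lemma par_refl: assumes "reflection S t" shows "par S E t t"
proof -
  obtain a s where a: "a \<in> lists S" "s \<in> S" "t = a @ [s] @ rev a"
    using assms unfolding reflection_def by blast
  have ra: "rev a \<in> lists S" using a by auto
  have "par S E (a @ rev a) t = False"
    using par_weq[OF weq_rev_cancel[OF a(1), of E "[]"], of t] by simp
  then have e1: "par S E a t = par S E (rev a) (rev a @ t @ a)" by (simp add: par_append)
  have w1: "weq S E (rev a @ t @ a) [s]"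
    using weq_rev_cancel2[OF a(1), of E "[s] @ rev a @ a"] weq_rev_cancel2[OF a(1), of E "[]"]
      weq_ctx[of S E "rev a @ a" "[]" "rev a @ a @ [s]" "[]"] a(3) weq_trans
    by (metis append.assoc append_Nil2 weq_app weq_refl)
  have w2: "weq S E (s # rev a @ t @ a @ [s]) [s]"
  proof -
    have "weq S E ([s] @ (rev a @ t @ a) @ [s]) ([s] @ [s] @ [s])"
      using weq_ctx[OF w1, of "[s]" "[s]"] by simp
    moreover have "weq S E ([] @ [s, s] @ [s]) ([] @ [s])" using weq_cancel a(2) by metis
    ultimately show ?thesis using weq_trans by fastforce
  qed
  have "par S E (a @ [s] @ rev a) t = (par S E a t \<noteq> (weq S E [s] (rev a @ t @ a) \<noteq> par S E (rev a) (s # rev a @ t @ a @ [s])))"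
    using par_append[of S E "a @ [s]" "rev a" t] by (simp add: par_append)
  also have "\<dots> = True"
    using e1 w1 w2 par_weq_t[of S E "rev a @ t @ a" "[s]" "rev a"] par_weq_t[OF w2, of "rev a"]
      weq_sym by blast
  finally show ?thesis using a(3) by simp
qed

lemma par_split: "w \<in> lists S \<Longrightarrow> par S E w t \<Longrightarrow> \<exists>a s b. w = a @ [s] @ b \<and> weq S E t (a @ [s] @ rev a)"
proof (induction w arbitrary: t)
  case Nil then show ?case by simp
next
  case (Cons s w)
  show ?case
  proof (cases "weq S E [s] t")
    case True
    then show ?thesis by (rule_tac x="[]" in exI) (auto intro: weq_sym)
  next
    case False
    then have "par S E w (s#t@[s])" using Cons.prems by simp
    then have "\<exists>a s' b. w = a @ [s'] @ b \<and> weq S E (s#t@[s]) (a @ [s'] @ rev a)"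
      using Cons by auto
    then obtain a s' b where "w = a @ [s'] @ b" "weq S E (s#t@[s]) (a @ [s'] @ rev a)"
      by blast
    moreover have "s \<in> S" using Cons.prems by simp
    ultimately show ?thesis using weq_conj[of s S E t "a @ [s'] @ rev a"]
      by (rule_tac x="s#a" in exI) (auto intro: weq_sym)
  qed
qed



declare weq_trans[trans]

lemma len_le: "u \<in> lists S \<Longrightarrow> weq S E u w \<Longrightarrow> len S E w \<le> length u"
  unfolding len_def by (intro Least_le bexI[of _ u]) auto

lemma len_ex: "w \<in> lists S \<Longrightarrow> \<exists>u\<in>lists S. weq S E u w \<and> length u = len S E w"
proof -
  assume w: "w \<in> lists S"
  have "\<exists>n. \<exists>u\<in>lists S. weq S E u w \<and> length u = n"
    using w weq_refl[of S E w] by blast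
  then show ?thesis unfolding len_def by (rule LeastI_ex)
qed

lemma len_weq: "weq S E w w' \<Longrightarrow> len S E w = len S E w'"
proof -
  assume h: "weq S E w w'"
  have "\<And>u. weq S E u w = weq S E u w'" using h weq_trans[of S E _ w w'] weq_trans[of S E _ w' w] weq_sym[of S E w w'] by blast
  then show ?thesis unfolding len_def by simp
qed

lemma len_cons: "s \<in> S \<Longrightarrow> w \<in> lists S \<Longrightarrow> len S E (s#w) \<le> Suc (len S E w)"
proof -
  assume "s \<in> S" "w \<in> lists S"
  then obtain u where "u \<in> lists S" "weq S E u w" "length u = len S E w" using len_ex[of w S E] by blast
  moreover have "weq S E (s#u) (s#w)" using weq_cons[OF \<open>weq S E u w\<close>] .
  ultimately show ?thesis using len_le[of "s#u" S E "s#w"] \<open>s \<in> S\<close> by simp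
qed

lemma weq_del: "weq S E t (a @ [s] @ rev a) \<Longrightarrow> a \<in> lists S \<Longrightarrow> s \<in> S \<Longrightarrow>
   weq S E (t @ a @ [s] @ b) (a @ b)"
proof -
  assume h: "weq S E t (a @ [s] @ rev a)" "a \<in> lists S" "s \<in> S"
  have "weq S E (t @ a @ [s] @ b) ((a @ [s] @ rev a) @ a @ [s] @ b)"
    using weq_app[OF h(1), of "a @ [s] @ b" "a @ [s] @ b"] by simp
  also have "weq S E ((a @ [s] @ rev a) @ a @ [s] @ b) ((a @ [s]) @ ([s] @ b))"
    using weq_ctx[OF weq_rev_cancel2[OF h(2), of E "[s] @ b"], of "a@[s]" "[]"] by simp
  also have "weq S E ((a @ [s]) @ ([s] @ b)) (a @ b)" using weq_cancel[of s S E a b] h(3) by simp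
  finally show ?thesis .
qed

lemma X1: assumes w: "w \<in> lists S" and t: "reflection S t" and p: "par S E w t"
  shows "len S E (t @ w) < len S E w"
proof -
  obtain u where u: "u \<in> lists S" "weq S E u w" "length u = len S E w" using len_ex[OF w] by blast
  have "par S E u t" using p par_weq[OF u(2)] by simp
  then obtain a s b where ab: "u = a @ [s] @ b" "weq S E t (a @ [s] @ rev a)"
    using par_split[OF u(1)] by blast
  have "weq S E (t @ u) (a @ b)" using weq_del[OF ab(2)] u(1) ab(1) by auto
  moreover have "weq S E (t @ u) (t @ w)" using weq_app[OF weq_refl u(2)] by blast
  ultimately have "len S E (t @ w) \<le> length (a @ b)"
    using len_le[of "a@b" S E "t@w"] u(1) ab(1) weq_trans weq_sym by fastforce
  then show ?thesis using u(3) ab(1) by simp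
qed

lemma X2: assumes w: "w \<in> lists S" and t: "reflection S t" and p: "\<not> par S E w t"
  shows "len S E w < len S E (t @ w)"
proof -
  have tl: "t \<in> lists S" using refl_lists[OF t] .
  have rt: "rev t = t" using refl_rev[OF t] .
  have "weq S E (t @ t @ t) t" using weq_rev_cancel[OF tl, of E t] rt by simp
  then have "par S E w (rev t @ t @ t) = par S E w t" using par_weq_t[of S E "t@t@t" t w] rt by simp
  then have "par S E (t @ w) t" using par_refl[OF t] p par_append[of S E t w t] by simp
  then have "len S E (t @ (t @ w)) < len S E (t @ w)" using X1[OF _ t] w tl by auto
  moreover have "weq S E (t @ t @ w) w" using weq_rev_cancel[OF tl, of E w] rt by simp
  ultimately show ?thesis using len_weq by metis
qed

lemma dich: "w \<in> lists S \<Longrightarrow> reflection S t \<Longrightarrow> len S E (t @ w) \<noteq> len S E w"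
  using X1[of w S t E] X2[of w S t E] by fastforce

lemma refl_simple: "s \<in> S \<Longrightarrow> reflection S [s]"
  unfolding reflection_def by (rule bexI[of _ "[]"]) auto



lemma refl_conj: "reflection S t \<Longrightarrow> c \<in> lists S \<Longrightarrow> reflection S (c @ t @ rev c)"
  unfolding reflection_def
proof -
  assume "\<exists>u\<in>lists S. \<exists>s\<in>S. t = u @ [s] @ rev u" "c \<in> lists S"
  then obtain u s where "u \<in> lists S" "s \<in> S" "t = u @ [s] @ rev u" by blast
  then show "\<exists>u\<in>lists S. \<exists>s\<in>S. c @ t @ rev c = u @ [s] @ rev u"
    using \<open>c \<in> lists S\<close> by (intro bexI[of _ "c@u"] bexI[of _ s]) auto
qed

lemma bstep_iff: "bruhat_step S E x y \<longleftrightarrow> x \<in> lists S \<and> y \<in> lists S \<and>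
   (\<exists>t. reflection S t \<and> weq S E (t @ x) y) \<and> len S E x < len S E y"
proof
  assume h: "bruhat_step S E x y"
  then obtain t where t: "reflection S t" "weq S E (x @ t) y" and x: "x \<in> lists S"
    unfolding bruhat_step_def by blast
  have "reflection S (x @ t @ rev x)" using refl_conj[OF t(1) x] .
  moreover have "weq S E ((x @ t) @ rev x @ x @ []) ((x @ t) @ [])"
    using weq_ctx[OF weq_rev_cancel2[OF x, of E "[]"], of "x@t" "[]"] by simp
  then have "weq S E ((x @ t @ rev x) @ x) y" using weq_trans[OF _ t(2), of "(x @ t @ rev x) @ x"] by simp
  ultimately show "x \<in> lists S \<and> y \<in> lists S \<and>
   (\<exists>t. reflection S t \<and> weq S E (t @ x) y) \<and> len S E x < len S E y"
    using h unfolding bruhat_step_def by blast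
next
  assume h: "x \<in> lists S \<and> y \<in> lists S \<and>
   (\<exists>t. reflection S t \<and> weq S E (t @ x) y) \<and> len S E x < len S E y"
  then obtain t where t: "reflection S t" "weq S E (t @ x) y" and x: "x \<in> lists S" by blast
  have rx: "rev x \<in> lists S" using x by auto
  have "reflection S (rev x @ t @ rev (rev x))" using refl_conj[OF t(1) rx] .
  moreover have "weq S E (x @ rev x @ t @ x) (t @ x)" using weq_rev_cancel[OF x] .
  then have "weq S E (x @ (rev x @ t @ x)) y" using weq_trans[OF _ t(2), of "x @ (rev x @ t @ x)"] by simp
  ultimately show "bruhat_step S E x y" using h unfolding bruhat_step_def by auto
qed

lemma step_lists: "bruhat_step S E x y \<Longrightarrow> x \<in> lists S \<and> y \<in> lists S"
  unfolding bruhat_step_def by blast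

lemma tr_lists: "(bruhat_step S E)\<^sup>+\<^sup>+ x y \<Longrightarrow> x \<in> lists S \<and> y \<in> lists S"
  by (induction rule: tranclp_induct) (auto dest: step_lists)

lemma step_weq1: "bruhat_step S E x y \<Longrightarrow> weq S E x x' \<Longrightarrow> bruhat_step S E x' y"
proof -
  assume h: "bruhat_step S E x y" "weq S E x x'"
  then have x': "x' \<in> lists S" using weq_lists[OF h(2)] step_lists[OF h(1)] by blast
  obtain t where t: "reflection S t" "weq S E (t @ x) y" using h(1) bstep_iff[of S E x y] by blast
  have "weq S E (t @ x') (t @ x)" using weq_app[OF weq_refl weq_sym[OF h(2)]] by blast
  then have "weq S E (t @ x') y" using weq_trans[OF _ t(2)] by blast
  moreover have "len S E x' = len S E x" using len_weq[OF h(2)] by simp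
  ultimately show ?thesis using h(1) x' t(1) bstep_iff[of S E x y] bstep_iff[of S E x' y] by metis
qed

lemma step_weq2: "bruhat_step S E x y \<Longrightarrow> weq S E y y' \<Longrightarrow> bruhat_step S E x y'"
proof -
  assume h: "bruhat_step S E x y" "weq S E y y'"
  then have y': "y' \<in> lists S" using weq_lists[OF h(2)] step_lists[OF h(1)] by blast
  obtain t where t: "reflection S t" "weq S E (t @ x) y" using h(1) bstep_iff[of S E x y] by blast
  then have "weq S E (t @ x) y'" using weq_trans[OF _ h(2)] by blast
  moreover have "len S E y' = len S E y" using len_weq[OF h(2)] by simp
  ultimately show ?thesis using h(1) y' t(1) bstep_iff[of S E x y] bstep_iff[of S E x y'] by metis
qed

lemma tr_weq1: "(bruhat_step S E)\<^sup>+\<^sup>+ x y \<Longrightarrow> weq S E x x' \<Longrightarrow> (bruhat_step S E)\<^sup>+\<^sup>+ x' y"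
proof -
  assume h: "(bruhat_step S E)\<^sup>+\<^sup>+ x y" "weq S E x x'"
  from h(1) obtain z where "bruhat_step S E x z" "(bruhat_step S E)\<^sup>*\<^sup>* z y"
    using tranclpD[OF h(1)] by blast
  then show ?thesis using rtranclp_into_tranclp2[of "bruhat_step S E" x' z y] step_weq1[OF _ h(2)] by blast
qed

lemma tr_weq2: "(bruhat_step S E)\<^sup>+\<^sup>+ x y \<Longrightarrow> weq S E y y' \<Longrightarrow> (bruhat_step S E)\<^sup>+\<^sup>+ x y'"
proof -
  assume h: "(bruhat_step S E)\<^sup>+\<^sup>+ x y" "weq S E y y'"
  from h(1) obtain z where "(bruhat_step S E)\<^sup>*\<^sup>* x z" "bruhat_step S E z y"
    using h(1) by (cases rule: tranclp.cases) (auto dest: tranclp_into_rtranclp)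
  then show ?thesis using rtranclp_into_tranclp1[of "bruhat_step S E" x z y'] step_weq2[OF _ h(2)] by blast
qed

lemma le_trans: "bruhat_le S E x y \<Longrightarrow> bruhat_le S E y z \<Longrightarrow> bruhat_le S E x z"
proof -
  assume a: "bruhat_le S E x y" "bruhat_le S E y z"
  show ?thesis
  proof (cases "weq S E x y")
    case True
    show ?thesis
    proof (cases "weq S E y z")
      case True
      then show ?thesis using \<open>weq S E x y\<close> weq_trans[of S E x y z] unfolding bruhat_le_def by blast
    next
      case False
      then have "(bruhat_step S E)\<^sup>+\<^sup>+ y z" using a(2) unfolding bruhat_le_def by blast
      then show ?thesis using tr_weq1[OF _ weq_sym[OF \<open>weq S E x y\<close>]] unfolding bruhat_le_def by blast
    qed
  next
    case False
    then have xy: "(bruhat_step S E)\<^sup>+\<^sup>+ x y" using a(1) unfolding bruhat_le_def by blast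
    show ?thesis
    proof (cases "weq S E y z")
      case True
      then show ?thesis using tr_weq2[OF xy] unfolding bruhat_le_def by blast
    next
      case False
      then have "(bruhat_step S E)\<^sup>+\<^sup>+ y z" using a(2) unfolding bruhat_le_def by blast
      then show ?thesis using tranclp_trans[OF xy] unfolding bruhat_le_def by blast
    qed
  qed
qed

lemma le_step: "bruhat_step S E x y \<Longrightarrow> bruhat_le S E x y"
  unfolding bruhat_le_def by auto

lemma le_weq: "weq S E x y \<Longrightarrow> bruhat_le S E x y"
  unfolding bruhat_le_def by auto


lemma mk_step: "x \<in> lists S \<Longrightarrow> y \<in> lists S \<Longrightarrow> reflection S t \<Longrightarrow> weq S E (t @ x) y \<Longrightarrow>
  len S E x < len S E y \<Longrightarrow> bruhat_step S E x y"
  using bstep_iff[of S E x y] by blast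

lemma H: assumes st: "bruhat_step S E w w'" and s: "s \<in> S"
  shows "bruhat_le S E (s#w) w' \<or> bruhat_le S E (s#w) (s#w')"
proof -
  have wl: "w \<in> lists S" "w' \<in> lists S" using step_lists[OF st] by auto
  obtain t where t: "reflection S t" "weq S E (t @ w) w'" and lw: "len S E w < len S E w'"
    using st bstep_iff[of S E w w'] by blast
  have tl: "t \<in> lists S" using refl_lists[OF t(1)] .
  have rt: "rev t = t" using refl_rev[OF t(1)] .
  have swl: "s#w \<in> lists S" "s#w' \<in> lists S" using wl s by auto
  have rs: "reflection S [s]" using refl_simple[OF s] .
  show ?thesis
  proof (cases "len S E (s#w) < len S E w")
    case True
    have "bruhat_step S E (s#w) w"
      using mk_step[OF swl(1) wl(1) rs _ True] weq_cancel0[OF s, of E w] by simp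
    then show ?thesis using le_trans[OF le_step le_step[OF st]] by blast
  next
    case False
    have "len S E ([s] @ w) \<noteq> len S E w" using dich[OF wl(1) rs] .
    with False have lsw: "len S E w < len S E (s#w)" by simp
    define t2 where "t2 = [s] @ t @ rev [s]"
    have t2r: "reflection S t2" unfolding t2_def using refl_conj[OF t(1), of "[s]"] s by simp
    have "weq S E ((s#t) @ [s,s] @ w) ((s#t) @ w)" using weq_cancel[OF s] .
    moreover have "weq S E ((s#t) @ w) (s#w')" using weq_cons[OF t(2)] by simp
    ultimately have e2: "weq S E (t2 @ (s#w)) (s#w')" unfolding t2_def
      using weq_trans[of S E "(s#t) @ [s,s] @ w" "(s#t) @ w" "s#w'"] by simp
    have "len S E (t2 @ (s#w)) \<noteq> len S E (s#w)" using dich[OF swl(1) t2r] .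
    then have ne: "len S E (s#w') \<noteq> len S E (s#w)" using len_weq[OF e2] by simp
    show ?thesis
    proof (cases "len S E (s#w) < len S E (s#w')")
      case True
      then show ?thesis using le_step[OF mk_step[OF swl t2r e2 True]] by blast
    next
      case False
      with ne have B2: "len S E (s#w') < len S E (s#w)" by simp
      have "len S E (s#w) \<le> Suc (len S E w)" using len_cons[OF s wl(1)] .
      obtain r where r: "r \<in> lists S" "weq S E r (s#w')" "length r = len S E (s#w')"
        using len_ex[OF swl(2)] by blast
      have "weq S E (s#r) (s#s#w')" using weq_cons[OF r(2)] .
      then have sr: "weq S E (s#r) w'" using weq_trans[OF _ weq_cancel0[OF s]] by blast
      have srl: "s#r \<in> lists S" using r(1) s by simp
      have ttw: "weq S E (t @ w') w"
      proof -
        have "weq S E (t @ w') (t @ t @ w)" using weq_app[OF weq_refl weq_sym[OF t(2)]] by simp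
        also have "weq S E (t @ t @ w) w" using weq_rev_cancel[OF tl, of E w] rt by simp
        finally show ?thesis .
      qed
      have "par S E w' t"
      proof (rule ccontr)
        assume "\<not> par S E w' t"
        then have "len S E w' < len S E (t @ w')" using X2[OF wl(2) t(1)] by blast
        then show False using len_weq[OF ttw] lw by simp
      qed
      then have "par S E (s#r) t" using par_weq[OF sr] by simp
      then obtain a s'' b where ab: "s#r = a @ [s''] @ b" "weq S E t (a @ [s''] @ rev a)"
        using par_split[OF srl] by blast
      have "a @ [s''] @ b \<in> lists S" using srl ab(1) by metis
      then have al: "a \<in> lists S" "s'' \<in> S" by auto
      have "weq S E (t @ (s#r)) (a @ b)" using weq_del[OF ab(2) al] ab(1) by simp
      moreover have "weq S E (t @ (s#r)) w"
        using weq_trans[OF weq_app[OF weq_refl sr] ttw] .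
      ultimately have wab: "weq S E w (a @ b)" using weq_trans[OF weq_sym] by blast
      show ?thesis
      proof (cases a)
        case Nil
        then have "b = r" using ab(1) by simp
        then have "weq S E w (s#w')" using wab Nil r(2) weq_trans[of S E w r "s#w'"] by simp
        then have "weq S E (s#w) (s#s#w')" by (rule weq_cons)
        then have "weq S E (s#w) w'" using weq_trans[OF _ weq_cancel0[OF s]] by blast
        then show ?thesis using le_weq by blast
      next
        case (Cons c a')
        then have c: "c = s" "r = a' @ [s''] @ b" using ab(1) by auto
        have "weq S E (s#w) (s#s#a'@b)" using weq_cons[OF wab] Cons c by simp
        then have "weq S E (s#w) (a'@b)" using weq_trans[OF _ weq_cancel0[OF s]] by blast
        then have "weq S E (a'@b) (s#w)" by (rule weq_sym)
        moreover have "a'@b \<in> lists S" using r(1) c by auto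
        ultimately have "len S E (s#w) \<le> length (a'@b)" using len_le[of "a'@b" S E "s#w"] by blast
        then show ?thesis using B2 r(3) c by simp
      qed
    qed
  qed
qed

lemma M: assumes le: "bruhat_le S E x y" and s: "s \<in> S" and x: "x \<in> lists S"
  shows "bruhat_le S E (s#x) y \<or> bruhat_le S E (s#x) (s#y)"
proof (cases "weq S E x y")
  case True
  then have "weq S E (s#x) (s#y)" by (rule weq_cons)
  then show ?thesis using le_weq[of S E "s#x" "s#y"] by blast
next
  case False
  then have "(bruhat_step S E)\<^sup>+\<^sup>+ x y" using le unfolding bruhat_le_def by blast
  then show ?thesis
  proof (induction rule: tranclp_induct)
    case (base y)
    then show ?case using H[OF base s] by blast
  next
    case (step y z)
    have yz: "bruhat_le S E y z" using le_step[OF step(2)] .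
    show ?case
    proof (cases "bruhat_le S E (s#x) y")
      case True
      then show ?thesis using le_trans[OF _ yz] by blast
    next
      case False
      then have a2: "bruhat_le S E (s#x) (s#y)" using step(3) by blast
      from H[OF step(2) s] show ?thesis
      proof
        assume "bruhat_le S E (s # y) z"
        then show ?thesis using le_trans[OF a2] by blast
      next
        assume "bruhat_le S E (s # y) (s#z)"
        then show ?thesis using le_trans[OF a2] by blast
      qed
    qed
  qed
qed

lemma Z: assumes le: "bruhat_le S E x y" and s: "s \<in> S" and x: "x \<in> lists S" and y: "y \<in> lists S"
  and d: "len S E (s#y) < len S E y"
  shows "bruhat_le S E (s#x) y"
proof -
  have "bruhat_step S E (s#y) y"
    using mk_step[OF _ y refl_simple[OF s] _ d] weq_cancel0[OF s, of E y] s y by simp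
  then show ?thesis using M[OF le s x] le_trans le_step by blast
qed

lemma cover_eq: assumes c: "bruhat_cover S E x y" and xz: "bruhat_less S E x z"
  and zy: "bruhat_le S E z y" and z: "z \<in> lists S"
  shows "weq S E z y"
  using c xz zy z unfolding bruhat_cover_def bruhat_less_def by blast

lemma one_side: assumes ra: "right_angled S E"
  and c1: "bruhat_cover S E x y1" and c2: "bruhat_cover S E x y2"
  and ne: "\<not> weq S E y1 y2" and x: "x \<in> lists S" and y1: "y1 \<in> lists S" and y2: "y2 \<in> lists S"
  and q: "q \<in> left_descents S E y1 \<inter> left_descents S E y2"
  shows "q \<in> left_descents S E x"
proof (rule ccontr)
  assume nq: "q \<notin> left_descents S E x"
  have qS: "q \<in> S" and d1: "len S E (q#y1) < len S E y1" and d2: "len S E (q#y2) < len S E y2"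
    using q unfolding left_descents_def by auto
  have "\<not> len S E (q#x) < len S E x" using nq qS unfolding left_descents_def by auto
  moreover have "len S E ([q] @ x) \<noteq> len S E x" using dich[OF x refl_simple[OF qS]] .
  ultimately have lt: "len S E x < len S E (q#x)" by simp
  have qx: "q#x \<in> lists S" using qS x by simp
  have st: "bruhat_step S E x (q#x)" using mk_step[OF x qx refl_simple[OF qS] _ lt] by simp
  have nw: "\<not> weq S E x (q#x)" using lt len_weq by force
  have less: "bruhat_less S E x (q#x)" using le_step[OF st] nw unfolding bruhat_less_def by blast
  have l1: "bruhat_le S E x y1" using c1 unfolding bruhat_cover_def bruhat_less_def by blast
  have l2: "bruhat_le S E x y2" using c2 unfolding bruhat_cover_def bruhat_less_def by blast
  have "weq S E (q#x) y1" using cover_eq[OF c1 less Z[OF l1 qS x y1 d1] qx] .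
  moreover have "weq S E (q#x) y2" using cover_eq[OF c2 less Z[OF l2 qS x y2 d2] qx] .
  ultimately show False using ne weq_trans weq_sym by blast
qed

theorem lemma7p8:
  fixes S :: "'a set" and E :: "'a \<Rightarrow> 'a \<Rightarrow> bool"
    and x1 x2 y1 y2 :: "'a list" and q :: 'a
  assumes "right_angled S E"
    and "butterfly S E x1 x2 y1 y2"
    and "q \<in> left_descents S E y1 \<inter> left_descents S E y2"
  shows "q \<in> left_descents S E x1 \<inter> left_descents S E x2"
  using one_side[OF assms(1) _ _ _ _ _ _ assms(3)] assms(2) unfolding butterfly_def by blast


end
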